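(* Let $K$ be a field and $E$ a row-finite graph with a fixed choice of special edges. Let $x$ and $x'$ be cycles in $E$ which have no common vertex. Then the right $L(E)$-modules $W(F_x,\phi_x)$ and $W(F_{x'},\phi_{x'})$ are not isomorphic.
   Context: Let $E=(E^0,E^1,s,r)$ be a row-finite directed graph. A vertex is regular if it emits at least one edge. For every regular vertex $v$ a fixed edge $e^v\in s^{-1}(v)$ is chosen; these are called special, all other edges nonspecial. A path of length $n\ge 1$ is a word $y_1\dots y_n$ of edges with $r(y_i)=s(y_{i+1})$; a path of length $0$ is a vertex. A cycle is a path $x_1\dots x_m$ of length $\ge1$ with $s(x_1)=r(x_m)$ and $s(x_i)\ne s(x_j)$ for $i\neq j$. The double graph $E_d$ has vertex set $E^0$ and edges $\{e,e^*: e\in E^1\}$ with $s_d(e)=s(e)$, $r_d(e)=r(e)$, $s_d(e^* )=r(e)$, $r_d(e^* )=s(e)$; the $e$ are real, the $e^*$ ghost edges. For a path $p=e_1\dots e_n$ in $E$ set $p^*=e_n^*\dots e_1^*$. The set $X$ of basis paths consists of the following paths in $E_d$: all vertices; all $p$ and $p^*$ with $p$ a path of length $\ge1$ in $E$; all $pq^*$ with $p=e_1\dots e_k$, $q=f_1\dots f_n$ paths of length $\ge 1$ in $E$, $r(p)=r(q)$, and either $e_k\ne f_n$ or $e_k=f_n$ nonspecial. The Leavitt path algebra $L(E)$ over $K$ is generated by $\{v,e,e^*: v\in E^0,e\in E^1\}$ subject to $uv=\delta_{uv}u$; $s(e)e=e=er(e)$, $r(e)e^*=e^*=e^*s(e)$;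 $e^*f=\delta_{ef}r(e)$; $\sum_{e\in s^{-1}(v)}ee^*=v$ for regular $v$. For a cycle $x=x_1\dots x_m$ in $E$ (a closed path in $E_d$ of real edges) and $1\le i\le m$, let $X_i$ be the set of basis paths $y=y_1\dots y_n$ with $n\ge1$ such that $x_iy_1$ is a basis path and $y_1\ne x_{i+1}$ ($x_{m+1}=x_1$). The graph $F_x$ has distinct vertices $w_i$ ($1\le i\le m$) and $w_{i,y}$ ($y\in X_i$), and edges $f_i$ from $w_{i-1}$ to $w_i$ ($w_0=w_m$) and $f_{i,y}$ with range $w_{i,y}$ and source $w_i$ if $|y|=1$, resp. $w_{i,y_1\dots y_{n-1}}$ if $n\ge 2$. The homomorphism $\phi_x:F_x\to E_d$: $\phi_x(w_i)=r_d(x_i)$, $\phi_x(w_{i,y})=r_d(y)$, $\phi_x(f_i)=x_i$, $\phi_x(f_{i,y})=$ last edge of $y$. $W(F,\phi)$ is the $K$-vector space with basis $F^0$ with the right $L(E)$-action on $w\in F^0$: $w.v=w$ if $\phi(w)=v$, else $0$; $w.e=r(f)$ if some $f\in s^{-1}(w)$ has $\phi(f)=e$, $w.e=s(f)$ if some $f\in r^{-1}(w)$ has $\phi(f)=e^*$, else $0$; $w.e^*=r(f)$ if some $f\in s^{-1}(w)$ has $\phi(f)=e^*$, $w.e^*=s(f)-T$ if $e$ is special and some $f\in r^{-1}(w)$ has $\phi(f)=e$, where $T=\sum r(p)$ over all paths $p$ in $F$ starting at $s(f)$ with $\phi(p)=dd^*$ for some $d\in s^{-1}(s(e))\setminus\{e\}$,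 else $0$. *)

theory Defs
  imports Main
begin

record ('v,'e) graph =
  verts :: "'v set"
  edges :: "'e set"
  src   :: "'e \<Rightarrow> 'v"
  rng   :: "'e \<Rightarrow> 'v"

definition wf_graph :: "('v,'e) graph \<Rightarrow> bool" where
  "wf_graph G \<longleftrightarrow> (\<forall>e\<in>edges G. src G e \<in> verts G \<and> rng G e \<in> verts G)"

definition row_finite :: "('v,'e) graph \<Rightarrow> bool" where
  "row_finite G \<longleftrightarrow> (\<forall>v\<in>verts G. finite {e\<in>edges G. src G e = v})"

definition regular :: "('v,'e) graph \<Rightarrow> 'v \<Rightarrow> bool" where
  "regular G v \<longleftrightarrow> (\<exists>e\<in>edges G. src G e = v)"

definition special_choice :: "('v,'e) graph \<Rightarrow> ('v \<Rightarrow> 'e) \<Rightarrow> bool" where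
  "special_choice G sp \<longleftrightarrow>
     (\<forall>v\<in>verts G. regular G v \<longrightarrow> sp v \<in> edges G \<and> src G (sp v) = v)"

definition special :: "('v,'e) graph \<Rightarrow> ('v \<Rightarrow> 'e) \<Rightarrow> 'e \<Rightarrow> bool" where
  "special G sp e \<longleftrightarrow> e = sp (src G e)"

definition is_path :: "('v,'e) graph \<Rightarrow> 'e list \<Rightarrow> bool" where
  "is_path G p \<longleftrightarrow> p \<noteq> [] \<and> set p \<subseteq> edges G \<and>
     (\<forall>i. Suc i < length p \<longrightarrow> rng G (p ! i) = src G (p ! Suc i))"

definition is_cycle :: "('v,'e) graph \<Rightarrow> 'e list \<Rightarrow> bool" where
  "is_cycle G x \<longleftrightarrow> is_path G x \<and> src G (hd x) = rng G (last x) \<and>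
     inj_on (\<lambda>i. src G (x ! i)) {..<length x}"

datatype 'e dedge = Real 'e | Ghost 'e

fun dedge_of :: "'e dedge \<Rightarrow> 'e" where
  "dedge_of (Real e) = e" | "dedge_of (Ghost e) = e"

fun dsrc :: "('v,'e) graph \<Rightarrow> 'e dedge \<Rightarrow> 'v" where
  "dsrc G (Real e) = src G e" | "dsrc G (Ghost e) = rng G e"

fun drng :: "('v,'e) graph \<Rightarrow> 'e dedge \<Rightarrow> 'v" where
  "drng G (Real e) = rng G e" | "drng G (Ghost e) = src G e"

definition is_dpath :: "('v,'e) graph \<Rightarrow> 'e dedge list \<Rightarrow> bool" where
  "is_dpath G w \<longleftrightarrow> w \<noteq> [] \<and> (\<forall>a\<in>set w. dedge_of a \<in> edges G) \<and>
     (\<forall>i. Suc i < length w \<longrightarrow> drng G (w ! i) = dsrc G (w ! Suc i))"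

text \<open>Basis paths of length at least 1: p, q^*, or p q^* with the stated condition
  on the last edges of p and q (q^* = map Ghost (rev q)).\<close>
definition basis_word :: "('v,'e) graph \<Rightarrow> ('v \<Rightarrow> 'e) \<Rightarrow> 'e dedge list \<Rightarrow> bool" where
  "basis_word G sp w \<longleftrightarrow> is_dpath G w \<and>
     (\<exists>p q. w = map Real p @ map Ghost (rev q) \<and>
        (p \<noteq> [] \<and> q \<noteq> [] \<longrightarrow> last p \<noteq> last q \<or> \<not> special G sp (last p)))"

text \<open>Cycle x = x_1 ... x_m is the list x, x_i = x ! (i - 1).  The set X_i:\<close>
definition Xset :: "('v,'e) graph \<Rightarrow> ('v \<Rightarrow> 'e) \<Rightarrow> 'e list \<Rightarrow> nat \<Rightarrow> 'e dedge list set" where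
  "Xset G sp x i = {y. basis_word G sp y \<and> basis_word G sp [Real (x ! (i - 1)), hd y]
                       \<and> hd y \<noteq> Real (x ! (i mod length x))}"

datatype 'e fvert = FW nat | FWy nat "'e dedge list"
datatype 'e fedge = Ff nat | Ffy nat "'e dedge list"

fun Fx_src :: "'e list \<Rightarrow> 'e fedge \<Rightarrow> 'e fvert" where
  "Fx_src x (Ff i) = FW (if i = 1 then length x else i - 1)"
| "Fx_src x (Ffy i y) = (if length y = 1 then FW i else FWy i (butlast y))"

fun Fx_rng :: "'e fedge \<Rightarrow> 'e fvert" where
  "Fx_rng (Ff i) = FW i"
| "Fx_rng (Ffy i y) = FWy i y"

definition Fx_graph :: "('v,'e) graph \<Rightarrow> ('v \<Rightarrow> 'e) \<Rightarrow> 'e list \<Rightarrow> ('e fvert, 'e fedge) graph" where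
  "Fx_graph G sp x =
     \<lparr> verts = {FW i | i. 1 \<le> i \<and> i \<le> length x}
               \<union> {FWy i y | i y. 1 \<le> i \<and> i \<le> length x \<and> y \<in> Xset G sp x i},
       edges = {Ff i | i. 1 \<le> i \<and> i \<le> length x}
               \<union> {Ffy i y | i y. 1 \<le> i \<and> i \<le> length x \<and> y \<in> Xset G sp x i},
       src = Fx_src x,
       rng = Fx_rng \<rparr>"

fun Fx_phiV :: "('v,'e) graph \<Rightarrow> 'e list \<Rightarrow> 'e fvert \<Rightarrow> 'v" where
  "Fx_phiV G x (FW i) = rng G (x ! (i - 1))"
| "Fx_phiV G x (FWy i y) = drng G (last y)"

fun Fx_phiE :: "'e list \<Rightarrow> 'e fedge \<Rightarrow> 'e dedge" where
  "Fx_phiE x (Ff i) = Real (x ! (i - 1))"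
| "Fx_phiE x (Ffy i y) = last y"

text \<open>Generators of L(E): vertices v, real edges e, ghost edges e^*.\<close>
datatype ('v,'e) gen = GV 'v | GE 'e | GG 'e

definition gens :: "('v,'e) graph \<Rightarrow> ('v,'e) gen set" where
  "gens G = GV ` verts G \<union> GE ` edges G \<union> GG ` edges G"

text \<open>Elements of W(F,phi): finite K-linear combinations of vertices of F.\<close>
definition Wvec :: "'k::field itself \<Rightarrow> ('a,'b) graph \<Rightarrow> ('a \<Rightarrow> 'k) set" where
  "Wvec K F = {m. finite {w. m w \<noteq> 0} \<and> {w. m w \<noteq> 0} \<subseteq> verts F}"

definition delta :: "'a \<Rightarrow> 'a \<Rightarrow> 'k::field" where
  "delta w = (\<lambda>u. if u = w then 1 else 0)"

definition Tterm :: "('v,'e) graph \<Rightarrow> ('a,'b) graph \<Rightarrow> ('b \<Rightarrow> 'e dedge)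
                      \<Rightarrow> 'e \<Rightarrow> 'b \<Rightarrow> 'a \<Rightarrow> 'k::field" where
  "Tterm E F phiE e f = (\<lambda>u. \<Sum>p\<in>{p. is_path F p \<and> src F (hd p) = src F f \<and>
        (\<exists>d\<in>edges E. src E d = src E e \<and> d \<noteq> e \<and> map phiE p = [Real d, Ghost d])}.
        delta (rng F (last p)) u)"

definition act_basis :: "'k::field itself \<Rightarrow> ('v,'e) graph \<Rightarrow> ('v \<Rightarrow> 'e) \<Rightarrow> ('a,'b) graph
     \<Rightarrow> ('a \<Rightarrow> 'v) \<Rightarrow> ('b \<Rightarrow> 'e dedge) \<Rightarrow> 'a \<Rightarrow> ('v,'e) gen \<Rightarrow> 'a \<Rightarrow> 'k" where
  "act_basis K E sp F phiV phiE w g =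
    (case g of
       GV v \<Rightarrow> (if phiV w = v then delta w else (\<lambda>_. 0))
     | GE e \<Rightarrow>
         (if \<exists>f\<in>edges F. src F f = w \<and> phiE f = Real e
          then delta (rng F (SOME f. f \<in> edges F \<and> src F f = w \<and> phiE f = Real e))
          else if \<exists>f\<in>edges F. rng F f = w \<and> phiE f = Ghost e
          then delta (src F (SOME f. f \<in> edges F \<and> rng F f = w \<and> phiE f = Ghost e))
          else (\<lambda>_. 0))
     | GG e \<Rightarrow>
         (if \<exists>f\<in>edges F. src F f = w \<and> phiE f = Ghost e
          then delta (rng F (SOME f. f \<in> edges F \<and> src F f = w \<and> phiE f = Ghost e))
          else if special E sp e \<and> (\<exists>f\<in>edges F. rng F f = w \<and> phiE f = Real e)
          then (let f = (SOME f. f \<in> edges F \<and> rng F f = w \<and> phiE f = Real e)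
                in (\<lambda>u. delta (src F f) u - Tterm E F phiE e f u))
          else (\<lambda>_. 0)))"

definition mact :: "'k::field itself \<Rightarrow> ('v,'e) graph \<Rightarrow> ('v \<Rightarrow> 'e) \<Rightarrow> ('a,'b) graph
     \<Rightarrow> ('a \<Rightarrow> 'v) \<Rightarrow> ('b \<Rightarrow> 'e dedge) \<Rightarrow> ('a \<Rightarrow> 'k) \<Rightarrow> ('v,'e) gen \<Rightarrow> 'a \<Rightarrow> 'k" where
  "mact K E sp F phiV phiE m g =
     (\<lambda>u. \<Sum>w\<in>{w. m w \<noteq> 0}. m w * act_basis K E sp F phiV phiE w g u)"

text \<open>Isomorphism of right L(E)-modules W(F1,phi1) and W(F2,phi2): a K-linear bijection
  commuting with the action of the generators of L(E) (hence with all of L(E)).\<close>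
definition W_iso :: "'k::field itself \<Rightarrow> ('v,'e) graph \<Rightarrow> ('v \<Rightarrow> 'e)
     \<Rightarrow> ('a,'b) graph \<Rightarrow> ('a \<Rightarrow> 'v) \<Rightarrow> ('b \<Rightarrow> 'e dedge)
     \<Rightarrow> ('c,'d) graph \<Rightarrow> ('c \<Rightarrow> 'v) \<Rightarrow> ('d \<Rightarrow> 'e dedge) \<Rightarrow> bool" where
  "W_iso K E sp F1 phiV1 phiE1 F2 phiV2 phiE2 \<longleftrightarrow>
    (\<exists>h :: ('a \<Rightarrow> 'k) \<Rightarrow> ('c \<Rightarrow> 'k).
       bij_betw h (Wvec K F1) (Wvec K F2) \<and>
       (\<forall>m\<in>Wvec K F1. \<forall>n\<in>Wvec K F1. h (\<lambda>u. m u + n u) = (\<lambda>u. h m u + h n u)) \<and>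
       (\<forall>c. \<forall>m\<in>Wvec K F1. h (\<lambda>u. c * m u) = (\<lambda>u. c * h m u)) \<and>
       (\<forall>m\<in>Wvec K F1. \<forall>g\<in>gens E.
          h (mact K E sp F1 phiV1 phiE1 m g) = mact K E sp F2 phiV2 phiE2 (h m) g))"

end

theory Submission
  imports Defs
begin

lemma delta_inj: "(delta a :: 'a \<Rightarrow> 'k::field) = delta b \<Longrightarrow> a = b"
  unfolding delta_def by (metis one_neq_zero)

lemma delta_nz: "(delta a :: 'a \<Rightarrow> 'k::field) \<noteq> (\<lambda>_. 0)"
  unfolding delta_def by (metis one_neq_zero)

lemma sum_nz: "(\<Sum>w\<in>A. f w) \<noteq> (0::'k::comm_monoid_add) \<Longrightarrow> \<exists>w\<in>A. f w \<noteq> 0"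
  by (meson sum.neutral)

lemma mact_nz: "mact K E sp F phiV phiE n g u \<noteq> 0 \<Longrightarrow>
   \<exists>w. n w \<noteq> 0 \<and> act_basis K E sp F phiV phiE w g u \<noteq> 0"
  unfolding mact_def using sum_nz by fastforce

lemma mact_delta:
  fixes K :: "'k::field itself"
  shows "mact K E sp F phiV phiE (delta w) g = act_basis K E sp F phiV phiE w g"
proof -
  have "{w'. delta w w' \<noteq> (0::'k)} = {w}" by (auto simp: delta_def)
  then show ?thesis unfolding mact_def by (simp add: delta_def)
qed

lemma act_GE: "act_basis K E sp F phiV phiE w (GE e) = (\<lambda>_. 0) \<or>
  (\<exists>a. act_basis K E sp F phiV phiE w (GE e) = delta a \<and>
     ((\<exists>f\<in>edges F. src F f = w \<and> rng F f = a \<and> phiE f = Real e) \<or>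
      (\<exists>f\<in>edges F. rng F f = w \<and> src F f = a \<and> phiE f = Ghost e)))"
proof (cases "\<exists>f\<in>edges F. src F f = w \<and> phiE f = Real e")
  case True
  let ?f = "SOME f. f \<in> edges F \<and> src F f = w \<and> phiE f = Real e"
  have "?f \<in> edges F \<and> src F ?f = w \<and> phiE ?f = Real e"
    using True by - (rule someI_ex, blast)
  then show ?thesis using True unfolding act_basis_def by auto
next
  case False
  note F1 = False
  show ?thesis
  proof (cases "\<exists>f\<in>edges F. rng F f = w \<and> phiE f = Ghost e")
    case True
    let ?f = "SOME f. f \<in> edges F \<and> rng F f = w \<and> phiE f = Ghost e"
    have "?f \<in> edges F \<and> rng F ?f = w \<and> phiE ?f = Ghost e"
      using True by - (rule someI_ex, blast)
    then show ?thesis using True F1 unfolding act_basis_def by auto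
  next
    case False
    then show ?thesis using F1 unfolding act_basis_def by auto
  qed
qed

lemma act_GV: "act_basis K E sp F phiV phiE w (GV v) u \<noteq> 0 \<Longrightarrow> phiV w = v \<and> w = u"
  unfolding act_basis_def by (auto simp: delta_def split: if_splits)

lemma core:
  fixes N :: "nat \<Rightarrow> 'a \<Rightarrow> 'k::field" and A :: "nat \<Rightarrow> 'a \<Rightarrow> 'a \<Rightarrow> 'k"
  assumes fin: "\<And>j. finite {u. N j u \<noteq> 0}"
    and step: "\<And>j u. N (Suc j) u \<noteq> 0 \<Longrightarrow> \<exists>w. N j w \<noteq> 0 \<and> A j w = delta u"
    and cs: "\<And>j w. A j w = (\<lambda>_. 0) \<or> (\<exists>a. A j w = delta a)"
    and per: "\<And>j. N (j + L) = N j" and L: "0 < L"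
    and nz: "N j w \<noteq> 0"
  shows "\<exists>a. A j w = delta a \<and> N (Suc j) a \<noteq> 0"
proof -
  define S where "S j = {u. N j u \<noteq> 0}" for j
  define D where "D j = {w \<in> S j. A j w \<noteq> (\<lambda>_. 0)}" for j
  define \<tau> where "\<tau> j w = (SOME a. A j w = delta a)" for j w
  have tau: "A j w = delta a \<Longrightarrow> \<tau> j w = a" for j w a
    unfolding \<tau>_def by (metis (mono_tags, lifting) delta_inj someI_ex)
  have finS: "finite (S j)" for j using fin S_def by auto
  have finD: "finite (D j)" for j using finS D_def by auto
  have sub: "S (Suc j) \<subseteq> \<tau> j ` D j" for j
  proof
    fix u assume "u \<in> S (Suc j)"
    then obtain w where w: "N j w \<noteq> 0" "A j w = delta u" using step S_def by blast
    then have "w \<in> D j" "\<tau> j w = u" using delta_nz[of u] tau[OF w(2)] unfolding D_def S_def by auto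
    thus "u \<in> \<tau> j ` D j" by blast
  qed
  have le: "card (S (Suc j)) \<le> card (S j)" for j
  proof -
    have "card (S (Suc j)) \<le> card (\<tau> j ` D j)" using sub finD by (simp add: card_mono)
    also have "\<dots> \<le> card (D j)" by (rule card_image_le[OF finD])
    also have "\<dots> \<le> card (S j)" using finS by (rule card_mono) (auto simp: D_def)
    finally show ?thesis .
  qed
  have le2: "card (S (j + k)) \<le> card (S j)" for j k
    by (induction k) (auto intro: order_trans[OF le])
  have eq: "card (S (Suc j)) = card (S j)" for j
  proof -
    have "S j = S (Suc j + (L - 1))" using per L S_def by simp
    then have "card (S j) \<le> card (S (Suc j))" using le2 by metis
    thus ?thesis using le[of j] by simp
  qed
  have DS: "D j = S j" for j
  proof -
    have "card (S (Suc j)) \<le> card (\<tau> j ` D j)" using sub finD by (simp add: card_mono)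
    also have "\<dots> \<le> card (D j)" by (rule card_image_le[OF finD])
    finally have "card (S j) \<le> card (D j)" using eq by simp
    thus ?thesis using finS by (intro card_seteq) (auto simp: D_def)
  qed
  have SS: "S (Suc j) = \<tau> j ` D j" for j
  proof -
    have "card (\<tau> j ` D j) \<le> card (S (Suc j))"
      using card_image_le[OF finD] eq DS by metis
    thus ?thesis using sub finD by (intro card_seteq) auto
  qed
  have "w \<in> D j" using nz DS S_def by auto
  then obtain a where a: "A j w = delta a" using cs D_def by blast
  then have "a \<in> S (Suc j)" using SS tau \<open>w \<in> D j\<close> by (metis image_eqI)
  thus ?thesis using a S_def by auto
qed


lemma Fx_simps[simp]:
  "verts (Fx_graph E sp x) = {FW i | i. 1 \<le> i \<and> i \<le> length x}
      \<union> {FWy i y | i y. 1 \<le> i \<and> i \<le> length x \<and> y \<in> Xset E sp x i}"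
  "edges (Fx_graph E sp x) = {Ff i | i. 1 \<le> i \<and> i \<le> length x}
      \<union> {Ffy i y | i y. 1 \<le> i \<and> i \<le> length x \<and> y \<in> Xset E sp x i}"
  "src (Fx_graph E sp x) = Fx_src x"
  "rng (Fx_graph E sp x) = Fx_rng"
  by (simp_all add: Fx_graph_def)

definition iota :: "nat \<Rightarrow> nat \<Rightarrow> nat" where
  "iota L j = (if j mod L = 0 then L else j mod L)"

lemma iota_range: "0 < L \<Longrightarrow> 1 \<le> iota L j \<and> iota L j \<le> L"
  unfolding iota_def by (simp add: less_imp_le)

lemma iota_mod: "0 < L \<Longrightarrow> iota L j mod L = j mod L"
  unfolding iota_def by simp

lemma iota_Suc_minus: "0 < L \<Longrightarrow> iota L (Suc j) - 1 = j mod L"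
  unfolding iota_def by (auto simp: mod_Suc)

lemma iota_Suc_prev: "0 < L \<Longrightarrow>
  (if iota L (Suc j) = 1 then L else iota L (Suc j) - 1) = iota L j"
  unfolding iota_def by (auto simp: mod_Suc)

lemma prev_inj: "1 \<le> i \<Longrightarrow> i \<le> (L::nat) \<Longrightarrow> 1 \<le> k \<Longrightarrow> k \<le> L \<Longrightarrow>
  (if i = 1 then L else i - 1) = (if k = 1 then L else k - 1) \<Longrightarrow> i = k"
proof -
  assume a: "1 \<le> i" "i \<le> L" "1 \<le> k" "k \<le> L"
    and e: "(if i = 1 then L else i - 1) = (if k = 1 then L else k - 1)"
  show "i = k"
  proof (cases "i = 1")
    case True
    show ?thesis
    proof (rule ccontr)
      assume "i \<noteq> k"
      then have "k \<noteq> 1" using True by simp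
      then have "L = k - 1" using e True by simp
      then show False using a by linarith
    qed
  next
    case False
    show ?thesis
    proof (cases "k = 1")
      case True
      then have "i - 1 = L" using e False by simp
      then show ?thesis using a by linarith
    next
      case False
      then have "i - 1 = k - 1" using e \<open>i \<noteq> 1\<close> by simp
      then show ?thesis using a by linarith
    qed
  qed
qed

lemma Xset_ne: "y \<in> Xset E sp x i \<Longrightarrow> y \<noteq> []"
  unfolding Xset_def basis_word_def is_dpath_def by auto

lemma cyc_len: "is_cycle E x \<Longrightarrow> 0 < length x"
  unfolding is_cycle_def is_path_def by auto

lemma Fx_step:
  assumes cyc: "is_cycle E x"
  shows "act_basis K E sp (Fx_graph E sp x) (Fx_phiV E x) (Fx_phiE x)
           (FW (iota (length x) j)) (GE (x ! (j mod length x)))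
         = delta (FW (iota (length x) (Suc j)))"
proof -
  define L where "L = length x"
  have L: "0 < L" using cyc_len[OF cyc] L_def by simp
  have Lx[simp]: "length x = L" using L_def by simp
  let ?F = "Fx_graph E sp x"
  let ?P = "\<lambda>f. f \<in> edges ?F \<and> src ?F f = FW (iota L j) \<and> Fx_phiE x f = Real (x ! (j mod L))"
  have ex: "?P (Ff (iota L (Suc j)))"
    using iota_range[OF L, of "Suc j"] iota_Suc_prev[OF L, of j] iota_Suc_minus[OF L, of j]
    by auto
  have all: "rng ?F f = FW (iota L (Suc j))" if "?P f" for f
  proof (cases f)
    case (Ff i)
    then have i: "1 \<le> i" "i \<le> L" "(if i = 1 then L else i - 1) = iota L j"
      using that by auto
    then have "i = iota L (Suc j)"
      using iota_range[OF L, of "Suc j"] iota_Suc_prev[OF L, of j]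
      prev_inj[of i L "iota L (Suc j)"] by auto
    then show ?thesis using Ff by simp
  next
    case (Ffy k y)
    then have y: "y \<in> Xset E sp x k" "length y = 1" "k = iota L j" "last y = Real (x ! (j mod L))"
      using that by (auto split: if_splits)
    then have "hd y = last y" by (cases y) auto
    then show ?thesis using y iota_mod[OF L, of j] unfolding Xset_def by auto
  qed
  have "?P (SOME f. ?P f)" by (rule someI, rule ex)
  then have r: "rng ?F (SOME f. ?P f) = FW (iota L (Suc j))" by (rule all)
  have "\<exists>f\<in>edges ?F. src ?F f = FW (iota L j) \<and> Fx_phiE x f = Real (x ! (j mod L))"
    using ex by blast
  then show ?thesis unfolding act_basis_def L_def[symmetric] using r by simp
qed

fun dep :: "'e fvert \<Rightarrow> nat" where
  "dep (FW i) = 0" | "dep (FWy i y) = length y"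

lemma tree_contra:
  assumes u: "u = FWy i y" and yne: "y \<noteq> []"
    and R1: "(\<exists>f\<in>edges (Fx_graph E sp x). Fx_src x f = p \<and> Fx_rng f = u \<and> Fx_phiE x f = Real e) \<or>
             (\<exists>f\<in>edges (Fx_graph E sp x). Fx_rng f = p \<and> Fx_src x f = u \<and> Fx_phiE x f = Ghost e)"
    and R2: "(\<exists>f\<in>edges (Fx_graph E sp x). Fx_src x f = u \<and> Fx_rng f = q \<and> Fx_phiE x f = Real e') \<or>
             (\<exists>f\<in>edges (Fx_graph E sp x). Fx_rng f = u \<and> Fx_src x f = q \<and> Fx_phiE x f = Ghost e')"
    and dp: "dep p \<le> dep u" and dq: "dep q \<le> dep u"
  shows False
proof -
  have L1: "last y = Real e"
  proof -
    from R1 show ?thesis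
    proof
      assume "\<exists>f\<in>edges (Fx_graph E sp x). Fx_src x f = p \<and> Fx_rng f = u \<and> Fx_phiE x f = Real e"
      then show ?thesis using u by auto
    next
      assume "\<exists>f\<in>edges (Fx_graph E sp x). Fx_rng f = p \<and> Fx_src x f = u \<and> Fx_phiE x f = Ghost e"
      then obtain k z where z: "z \<in> Xset E sp x k" "p = FWy k z" "length z \<noteq> 1" "butlast z = y"
        using u by (auto split: if_splits)
      then have "length z = length y + 1" using Xset_ne[OF z(1)] by (metis length_butlast Suc_pred' length_greater_0_conv Suc_eq_plus1) 
      then show ?thesis using dp u z by simp
    qed
  qed
  from R2 show False
  proof
    assume "\<exists>f\<in>edges (Fx_graph E sp x). Fx_src x f = u \<and> Fx_rng f = q \<and> Fx_phiE x f = Real e'"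
    then obtain k z where z: "z \<in> Xset E sp x k" "q = FWy k z" "length z \<noteq> 1" "butlast z = y"
      using u by (auto split: if_splits)
    then have "length z = length y + 1" using Xset_ne[OF z(1)] by (metis length_butlast Suc_pred' length_greater_0_conv Suc_eq_plus1) 
    then show ?thesis using dq u z by simp
  next
    assume "\<exists>f\<in>edges (Fx_graph E sp x). Fx_rng f = u \<and> Fx_src x f = q \<and> Fx_phiE x f = Ghost e'"
    then have "last y = Ghost e'" using u by auto
    then show ?thesis using L1 by simp
  qed
qed

lemma cyc_rng: "is_cycle E x \<Longrightarrow> rng E ` set x \<subseteq> src E ` set x"
proof
  fix v assume c: "is_cycle E x" and "v \<in> rng E ` set x"
  then obtain k where k: "k < length x" "v = rng E (x ! k)" by (metis imageE in_set_conv_nth)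
  show "v \<in> src E ` set x"
  proof (cases "Suc k < length x")
    case True
    then have "v = src E (x ! Suc k)" using c k unfolding is_cycle_def is_path_def by auto
    then show ?thesis using True by auto
  next
    case False
    then have "k = length x - 1" using k by simp
    moreover have "x \<noteq> []" using k by auto
    ultimately have "x ! k = last x" by (simp add: last_conv_nth)
    then have "v = src E (hd x)" using c k unfolding is_cycle_def by simp
    then show ?thesis using c unfolding is_cycle_def is_path_def by (metis hd_in_set image_eqI)
  qed
qed


theorem theorem6p3:
  fixes K :: "'k::field itself"
    and E :: "('v,'e) graph" and sp :: "'v \<Rightarrow> 'e"
    and x x' :: "'e list"
  assumes "wf_graph E"
    and "row_finite E"
    and "special_choice E sp"
    and "is_cycle E x"
    and "is_cycle E x'"
    and "src E ` set x \<inter> src E ` set x' = {}"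
  shows "\<not> W_iso K E sp
            (Fx_graph E sp x) (Fx_phiV E x) (Fx_phiE x)
            (Fx_graph E sp x') (Fx_phiV E x') (Fx_phiE x')"
proof
  note wf = assms(1) and cx = assms(4) and cx' = assms(5) and disj = assms(6)
  let ?F = "Fx_graph E sp x" and ?F' = "Fx_graph E sp x'"
  let ?act = "act_basis K E sp ?F' (Fx_phiV E x') (Fx_phiE x')"
  let ?mact = "mact K E sp ?F' (Fx_phiV E x') (Fx_phiE x')"
  assume "W_iso K E sp ?F (Fx_phiV E x) (Fx_phiE x) ?F' (Fx_phiV E x') (Fx_phiE x')"
  then obtain h :: "('e fvert \<Rightarrow> 'k) \<Rightarrow> ('e fvert \<Rightarrow> 'k)" where
    bij: "bij_betw h (Wvec K ?F) (Wvec K ?F')" and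
    smul: "\<forall>c. \<forall>m\<in>Wvec K ?F. h (\<lambda>u. c * m u) = (\<lambda>u. c * h m u)" and
    comm: "\<forall>m\<in>Wvec K ?F. \<forall>g\<in>gens E.
          h (mact K E sp ?F (Fx_phiV E x) (Fx_phiE x) m g) = ?mact (h m) g"
    unfolding W_iso_def by blast
  define L where "L = length x"
  have L: "0 < L" using cyc_len[OF cx] L_def by simp
  define N where "N j = h (delta (FW (iota L j)))" for j
  have dW: "(delta (FW (iota L j)) :: _ \<Rightarrow> 'k) \<in> Wvec K ?F" for j
  proof -
    have eq: "{w. (delta (FW (iota L j)) :: _ \<Rightarrow> 'k) w \<noteq> 0} = {FW (iota L j)}"
      by (auto simp: delta_def)
    have v: "FW (iota L j) \<in> verts ?F" using iota_range[OF L, of j] L_def by simp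
    show ?thesis unfolding Wvec_def mem_Collect_eq eq using v by simp
  qed
  have NW: "N j \<in> Wvec K ?F'" for j
    using bij_betwE[OF bij] dW[of j] unfolding N_def by blast
  have zW: "(\<lambda>_. 0 :: 'k) \<in> Wvec K ?F" unfolding Wvec_def by simp
  have h0: "h (\<lambda>_. 0) = (\<lambda>_. 0)"
  proof -
    have "h (\<lambda>u. 0 * delta (FW (iota L 0)) u) = (\<lambda>u. 0 * h (delta (FW (iota L 0))) u)"
      using smul dW[of 0] by blast
    then show ?thesis by simp
  qed
  have Nnz: "N j \<noteq> (\<lambda>_. 0)" for j
  proof
    assume "N j = (\<lambda>_. 0)"
    then have hh: "h (delta (FW (iota L j))) = h (\<lambda>_. 0)" using h0 N_def by simp
    have inj: "inj_on h (Wvec K ?F)" by (rule bij_betw_imp_inj_on[OF bij])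
    have "(delta (FW (iota L j)) :: 'e fvert \<Rightarrow> 'k) = (\<lambda>_. 0)"
      by (rule inj_onD[OF inj hh dW[of j] zW])
    then show False by (rule delta_nz[THEN notE])
  qed
  have xE: "x ! k \<in> edges E" if "k < L" for k
    using cx that L_def unfolding is_cycle_def is_path_def by auto
  have NS: "N (Suc j) = ?mact (N j) (GE (x ! (j mod L)))" for j
  proof -
    have g: "GE (x ! (j mod L)) \<in> gens E" using xE[of "j mod L"] L unfolding gens_def by auto
    have "N (Suc j) = h (mact K E sp ?F (Fx_phiV E x) (Fx_phiE x) (delta (FW (iota L j))) (GE (x ! (j mod L))))"
      unfolding N_def mact_delta using Fx_step[OF cx, of K sp j] L_def by simp
    also have "\<dots> = ?mact (N j) (GE (x ! (j mod L)))" unfolding N_def using comm dW[of j] g by blast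
    finally show ?thesis .
  qed
  define V where "V j = Fx_phiV E x (FW (iota L j))" for j
  have NV: "N j = ?mact (N j) (GV (V j))" for j
  proof -
    have "iota L j - 1 < L" using iota_range[OF L, of j] by linarith
    then have "V j \<in> verts E" using wf xE unfolding V_def wf_graph_def by auto
    then have g: "GV (V j) \<in> gens E" unfolding gens_def by auto
    have "N j = h (mact K E sp ?F (Fx_phiV E x) (Fx_phiE x) (delta (FW (iota L j))) (GV (V j)))"
      unfolding N_def mact_delta V_def by (simp add: act_basis_def)
    also have "\<dots> = ?mact (N j) (GV (V j))" unfolding N_def using comm dW[of j] g by blast
    finally show ?thesis .
  qed
  have Nper: "N (j + L) = N j" for j unfolding N_def iota_def by simp
  have Nmod: "N j = N (j mod L)" for j unfolding N_def iota_def by simp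
  have finN: "finite {u. N j u \<noteq> 0}" for j using NW unfolding Wvec_def by auto
  have vertN: "N j u \<noteq> 0 \<Longrightarrow> u \<in> verts ?F'" for j u using NW unfolding Wvec_def by auto
  have phiN: "N j u \<noteq> 0 \<Longrightarrow> Fx_phiV E x' u = V j" for j u
  proof -
    assume "N j u \<noteq> 0"
    then have "?mact (N j) (GV (V j)) u \<noteq> 0" using NV by metis
    then show ?thesis using mact_nz act_GV by metis
  qed
  have notFW: "\<exists>i y. u = FWy i y \<and> y \<in> Xset E sp x' i" if "N j u \<noteq> 0" for j u
  proof -
    have Vx: "V j \<in> src E ` set x"
    proof -
      have "iota L j - 1 < L" using iota_range[OF L, of j] by linarith
      then have "V j \<in> rng E ` set x" unfolding V_def using L_def by auto
      then show ?thesis using cyc_rng[OF cx] by blast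
    qed
    show ?thesis
    proof (cases u)
      case (FW i)
      then have "1 \<le> i" "i \<le> length x'" using vertN[OF that] by auto
      then have "i - 1 < length x'" by linarith
      then have "Fx_phiV E x' u \<in> src E ` set x'" using FW cyc_rng[OF cx'] by auto
      then show ?thesis using phiN[OF that] Vx disj by auto
    next
      case (FWy i y)
      then show ?thesis using vertN[OF that] by auto
    qed
  qed
  define A where "A j w = ?act w (GE (x ! (j mod L)))" for j w
  have csA0: "A j w = (\<lambda>_. 0) \<or> (\<exists>a. A j w = delta a \<and>
     ((\<exists>f\<in>edges ?F'. Fx_src x' f = w \<and> Fx_rng f = a \<and> Fx_phiE x' f = Real (x ! (j mod L))) \<or>
      (\<exists>f\<in>edges ?F'. Fx_rng f = w \<and> Fx_src x' f = a \<and> Fx_phiE x' f = Ghost (x ! (j mod L)))))" for j w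
  proof -
    have "?act w (GE (x ! (j mod L))) = (\<lambda>_. 0) \<or> (\<exists>a. ?act w (GE (x ! (j mod L))) = delta a \<and>
     ((\<exists>f\<in>edges ?F'. src ?F' f = w \<and> rng ?F' f = a \<and> Fx_phiE x' f = Real (x ! (j mod L))) \<or>
      (\<exists>f\<in>edges ?F'. rng ?F' f = w \<and> src ?F' f = a \<and> Fx_phiE x' f = Ghost (x ! (j mod L)))))"
      by (rule act_GE)
    then show ?thesis unfolding A_def Fx_simps(3,4) .
  qed
  have csA: "A j w = (\<lambda>_. 0) \<or> (\<exists>a. A j w = delta a)" for j w
    using csA0[of j w] by blast
  have relA: "(\<exists>f\<in>edges ?F'. Fx_src x' f = w \<and> Fx_rng f = a \<and> Fx_phiE x' f = Real (x ! (j mod L))) \<or>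
      (\<exists>f\<in>edges ?F'. Fx_rng f = w \<and> Fx_src x' f = a \<and> Fx_phiE x' f = Ghost (x ! (j mod L)))"
    if a: "A j w = delta a" for j w a
  proof -
    from csA0[of j w] show ?thesis
    proof
      assume "A j w = (\<lambda>_. 0)"
      then have "(delta a :: 'e fvert \<Rightarrow> 'k) = (\<lambda>_. 0)" using a by simp
      then show ?thesis by (rule delta_nz[THEN notE])
    next
      assume "\<exists>a'. A j w = delta a' \<and>
     ((\<exists>f\<in>edges ?F'. Fx_src x' f = w \<and> Fx_rng f = a' \<and> Fx_phiE x' f = Real (x ! (j mod L))) \<or>
      (\<exists>f\<in>edges ?F'. Fx_rng f = w \<and> Fx_src x' f = a' \<and> Fx_phiE x' f = Ghost (x ! (j mod L))))"
      then obtain a' where a': "A j w = delta a'" and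
        r: "(\<exists>f\<in>edges ?F'. Fx_src x' f = w \<and> Fx_rng f = a' \<and> Fx_phiE x' f = Real (x ! (j mod L))) \<or>
      (\<exists>f\<in>edges ?F'. Fx_rng f = w \<and> Fx_src x' f = a' \<and> Fx_phiE x' f = Ghost (x ! (j mod L)))"
        by blast
      have "(delta a :: 'e fvert \<Rightarrow> 'k) = delta a'" using a a' by simp
      then have "a = a'" by (rule delta_inj)
      then show ?thesis using r by simp
    qed
  qed
  have stepA: "\<exists>w. N j w \<noteq> 0 \<and> A j w = delta u" if "N (Suc j) u \<noteq> 0" for j u
  proof -
    have "?mact (N j) (GE (x ! (j mod L))) u \<noteq> 0" using that NS[of j] by simp
    then obtain w where w: "N j w \<noteq> 0" "A j w u \<noteq> 0"
      unfolding A_def by (blast dest: mact_nz)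
    from csA[of j w] show ?thesis
    proof
      assume "A j w = (\<lambda>_. 0)"
      then show ?thesis using w by simp
    next
      assume "\<exists>a. A j w = delta a"
      then obtain a where a: "A j w = delta a" by blast
      then have "a = u" using w(2) unfolding delta_def by (auto split: if_splits)
      then show ?thesis using w a by blast
    qed
  qed
  have succ: "\<exists>a. A j w = delta a \<and> N (Suc j) a \<noteq> 0" if "N j w \<noteq> 0" for j w
    using core[of N A L j w, OF finN stepA csA Nper L that] by blast
  define U where "U = (\<Union>j<L. {u. N j u \<noteq> 0})"
  have finU: "finite U" unfolding U_def using finN by auto
  have "N 0 \<noteq> (\<lambda>_. 0)" by (rule Nnz)
  then obtain u0 where "N 0 u0 \<noteq> 0" by auto
  then have Une: "U \<noteq> {}" unfolding U_def using L by auto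
  define M where "M = Max (dep ` U)"
  have depM: "dep u \<le> M" if "N j u \<noteq> 0" for j u
  proof -
    have "u \<in> U" unfolding U_def using that Nmod[of j] L by (auto intro!: bexI[of _ "j mod L"])
    then show ?thesis unfolding M_def using finU by simp
  qed
  have "M \<in> dep ` U" unfolding M_def using finU Une by simp
  then obtain u j1 where j1: "j1 < L" "N j1 u \<noteq> 0" "dep u = M" unfolding U_def by auto
  define j0 where "j0 = j1 + L - 1"
  have "Suc j0 = j1 + L" unfolding j0_def using L by simp
  then have uS: "N (Suc j0) u \<noteq> 0" using j1 Nper by metis
  obtain p where p: "N j0 p \<noteq> 0" "A j0 p = delta u" using stepA[OF uS] by blast
  obtain q where q: "A (Suc j0) u = delta q" "N (Suc (Suc j0)) q \<noteq> 0" using succ[OF uS] by blast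
  obtain i y where iy: "u = FWy i y" "y \<in> Xset E sp x' i" using notFW[OF uS] by blast
  show False
    using tree_contra[OF iy(1) Xset_ne[OF iy(2)] relA[OF p(2)] relA[OF q(1)]]
      depM[OF p(1)] depM[OF q(2)] j1(3) by simp
qed

end
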